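(* For $0<q<1$, \[ \sum_{k=0}^\infty\frac{q^k}{(1-q^{k+\frac12})^2}=\sum_{n=0}^\infty\frac{(1-2q^{2n+\frac32}+q^{n+1})\,q^{n^2+n}}{(1-q^{2n+1})(1+q^{n+1})}\cdot\frac{(q;q)_n^4}{(q^{\frac12};q)_{n+1}^2\,(q;q)_{2n}}. \]
   Context: $(x;q)_n=\prod_{i=0}^{n-1}(1-xq^i)$ is the $q$-shifted factorial. *)

theory Defs
  imports Complex_Main
begin

definition qpoch :: "real \<Rightarrow> real \<Rightarrow> nat \<Rightarrow> real" where
  "qpoch x q n = (\<Prod>i<n. 1 - x * q ^ i)"

end

theory Submission imports Defs begin

definition Hf :: "real \<Rightarrow> nat \<Rightarrow> real \<Rightarrow> real" where
  "Hf q n z = q^(n^2) * z^(2*n) * qpoch q q n ^ 4 / (qpoch q q (2*n) * (qpoch z q (n+1))\<^sup>2)"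

definition Rf :: "real \<Rightarrow> nat \<Rightarrow> real \<Rightarrow> real" where
  "Rf q n z = (1 - 2 * q ^ (2*n+1) * z + q ^ (n+1)) * q ^ (n^2) * z^(2*n)
          / ((1 - q ^ (2*n+1)) * (1 + q ^ (n+1)))
          * (qpoch q q n ^ 4 / ((qpoch z q (n+1))\<^sup>2 * qpoch q q (2*n)))"

lemma qpoch_Suc: "qpoch z q (Suc n) = qpoch z q n * (1 - z*q^n)"
  by (simp add: qpoch_def)

lemma qpoch_shift: "qpoch (q*z) q n * (1 - z) = qpoch z q n * (1 - z*q^n)"
proof (induction n)
  case 0 then show ?case by (simp add: qpoch_def)
next
  case (Suc n)
  have "qpoch (q*z) q (Suc n) * (1 - z) = (qpoch (q*z) q n * (1 - z)) * (1 - q*z*q^n)"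
    by (simp add: qpoch_Suc)
  also have "\<dots> = qpoch z q n * (1 - z*q^n) * (1 - q*z*q^n)" using Suc by simp
  also have "\<dots> = qpoch z q (Suc n) * (1 - z*q^Suc n)" by (simp add: qpoch_Suc mult_ac)
  finally show ?case .
qed

lemma qpoch_pos:
  assumes "0 < q" "q < 1" "0 \<le> z" "z < 1"
  shows "qpoch z q n > 0"
  unfolding qpoch_def
proof (rule prod_pos)
  fix i assume "i \<in> {..<n}"
  have "q^i \<le> 1" using assms by (simp add: power_le_one)
  hence "z*q^i \<le> z" using assms by (simp add: mult_left_le)
  thus "0 < 1 - z*q^i" using assms by simp
qed

lemma qpoch_lower:
  assumes "0 < q" "q < 1" "0 \<le> z" "z \<le> x" "x < 1"
  shows "qpoch z q n \<ge> (1 - x)^n"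
proof (induction n)
  case 0 then show ?case by (simp add: qpoch_def)
next
  case (Suc n)
  have "q^n \<le> 1" using assms by (simp add: power_le_one)
  hence "z*q^n \<le> x" using assms by (meson dual_order.trans mult_left_le)
  hence f: "1 - x \<le> 1 - z*q^n" by simp
  have "(1-x)^Suc n = (1-x)^n * (1-x)" by simp
  also have "\<dots> \<le> qpoch z q n * (1 - z*q^n)"
    by (rule mult_mono[OF Suc f]) (use assms qpoch_pos[of q z n] in auto)
  finally show ?case by (simp add: qpoch_Suc)
qed


lemma poly_id: fixes q p z :: real shows
 "(1 - 2*q*p^2*z + q*p)*(1 - z*q*p)^2 - q*p^2*(1-z)^2*(1 - 2*q^2*p^2*z + q*p) = (1-q*p^2)*(1+q*p)*(1-z*q*p)^2 - q*p^2*z^2*(1-q*p)^3"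
  by algebra

lemma gen_L: fixes K N1 N2 D1 D2 D3 D4 a c b Q Z q p :: real
  assumes "a \<noteq> 0" "c \<noteq> 0" "D1 \<noteq> 0" "D2 \<noteq> 0" "D3 \<noteq> 0" "D4 \<noteq> 0"
  shows "N1 * Q * Z / (D1*D2) * (b^4 / (a^2 * c))
     - q * (N2 * Q * (p^2*Z) / (D1*D2) * (b^4 / ((a*D3/D4)^2 * c)))
     = (Q*Z*b^4/(c*a^2)) * ((N1*D3^2 - q*p^2*D4^2*N2) / (D1*D2*D3^2))"
  using assms by (simp add: field_simps)

lemma gen_R: fixes D1 D2 D3 D5 a c b Q Z q p z :: real
  assumes "a \<noteq> 0" "c \<noteq> 0" "D1 \<noteq> 0" "D2 \<noteq> 0" "D3 \<noteq> 0" "D5 \<noteq> 0"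
  shows "Q*Z*b^4/(c*a^2) - Q*q*p^2*(Z*z^2)*(b*D5)^4/((c*D1*(D5*D2))*(a*D3)^2)
     = (Q*Z*b^4/(c*a^2)) * ((D1*D2*D3^2 - q*p^2*z^2*D5^3) / (D1*D2*D3^2))"
proof -
  have "D5^4 = D5 * D5^3" by (simp add: eval_nat_numeral)
  thus ?thesis using assms by (simp add: field_simps)
qed

lemma step: fixes q p z a b c Q Z :: real
  assumes "a > 0" "b > 0" "c > 0" "q*p < 1" "z*q*p < 1" "q*p^2 < 1" "z < 1" "q > 0" "p > 0"
  shows "(1 - 2*(q*p^2)*z + q*p) * Q * Z / ((1 - q*p^2)*(1+q*p)) * (b^4 / (a^2 * c))
     - q * ((1 - 2*(q*p^2)*(q*z) + q*p) * Q * (p^2*Z) / ((1 - q*p^2)*(1+q*p)) * (b^4 / ((a*(1 - z*q*p)/(1-z))^2 * c)))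
   = Q*Z*b^4/(c*a^2) - Q*q*p^2*(Z*z^2)*(b*(1-q*p))^4/((c*(1-q*p^2)*(1-q^2*p^2))*(a*(1-z*q*p))^2)"
proof -
  have "q*p > 0" using assms by simp
  hence n1: "1 - q*p^2 \<noteq> 0" "1 + q*p \<noteq> 0" "1 - z*q*p \<noteq> 0" "1 - z \<noteq> 0" "1 - q*p \<noteq> 0"
      using assms by linarith+
  have n2: "1 - q^2*p^2 = (1-q*p)*(1+q*p)" by (simp add: algebra_simps power2_eq_square)
  have e: "2*(q*p^2)*(q*z) = 2*q^2*p^2*z" "2*(q*p^2)*z = 2*q*p^2*z" by (simp_all add: power2_eq_square)
  have a0: "a \<noteq> 0" "c \<noteq> 0" using assms by auto
  note L = gen_L[OF a0 n1(1,2,3,4), of "1 - 2*(q*p^2)*z + q*p" Q Z b q "1 - 2*(q*p^2)*(q*z) + q*p" p]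
  note R = gen_R[OF a0 n1(1,2,3,5), of Q Z b q p z]
  show ?thesis
    unfolding L n2 R unfolding e poly_id ..
qed

lemma key_identity:
  assumes q: "0 < q" "q < 1" and z: "0 \<le> z" "z < 1"
  shows "Rf q n z - q * Rf q n (q*z) = Hf q n z - Hf q (Suc n) z"
proof -
  define a where "a = qpoch z q (n+1)"
  define b where "b = qpoch q q n"
  define c where "c = qpoch q q (2*n)"
  define p where "p = q^n"
  define Q where "Q = q^(n^2)"
  define Z where "Z = z^(2*n)"
  have a0: "a > 0" unfolding a_def using qpoch_pos q z by auto
  have b0: "b > 0" unfolding b_def using qpoch_pos q by auto
  have c0: "c > 0" unfolding c_def using qpoch_pos q by auto
  have p0: "0 < p" "p \<le> 1" unfolding p_def using q by (auto simp: power_le_one)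
  have qp1: "q*p < 1" using p0 q by (metis mult_le_one less_le not_le order.refl mult_less_le_imp_less less_eq_real_def)
  have zq1: "z*q*p < 1" using p0 q z qp1
    by (smt (verit, best) mult_le_cancel_right1 mult_nonneg_nonneg)
  have qpp: "q*p^2 < 1" using p0 q qp1 by (smt (verit) mult_left_le power2_eq_square mult.assoc mult_nonneg_nonneg)
  have e1: "qpoch (q*z) q (n+1) = a*(1 - z*q*p)/(1-z)"
    using qpoch_shift[of q z "n+1"] z unfolding a_def p_def by (simp add: field_simps)
  have e2: "qpoch z q (Suc n + 1) = a*(1 - z*q*p)"
    unfolding a_def p_def by (simp add: qpoch_Suc mult_ac)
  have e3: "qpoch q q (Suc n) = b*(1 - q*p)"
    unfolding b_def p_def by (simp add: qpoch_Suc mult_ac)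
  have e4: "qpoch q q (2*Suc n) = c*(1-q*p^2)*(1-q^2*p^2)"
    unfolding c_def p_def by (simp add: qpoch_Suc mult_ac power_mult power2_eq_square)
  have e5: "q^(Suc n^2) = Q*q*p^2"
    unfolding Q_def p_def by (simp add: power2_eq_square power_add power_mult algebra_simps)
  have e6: "(q*z)^(2*n) = p^2*Z" unfolding Z_def p_def by (simp add: power_mult_distrib power_mult[symmetric] mult.commute[of 2 n])
  have e7: "z^(2*Suc n) = Z*z^2" unfolding Z_def by (simp add: power_add power2_eq_square)
  have e8: "q^(2*n+1) = q*p^2" "q^(n+1) = q*p" "q^(2*n) = p^2"
    unfolding p_def by (simp_all add: power_add power_mult mult_ac)
  have e9: "qpoch z q 1 = 1 - z" by (simp add: qpoch_def)
  have "Rf q n z - q * Rf q n (q*z) =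
     (1 - 2*(q*p^2)*z + q*p) * Q * Z / ((1 - q*p^2)*(1+q*p)) * (b^4 / (a^2 * c))
     - q * ((1 - 2*(q*p^2)*(q*z) + q*p) * Q * (p^2*Z) / ((1 - q*p^2)*(1+q*p)) * (b^4 / ((a*(1 - z*q*p)/(1-z))^2 * c)))"
    unfolding Rf_def e1 e6 e8 by (simp add: a_def b_def c_def Q_def Z_def)
  also have "\<dots> = Q*Z*b^4/(c*a^2) - Q*q*p^2*(Z*z^2)*(b*(1-q*p))^4/((c*(1-q*p^2)*(1-q^2*p^2))*(a*(1-z*q*p))^2)"
    by (rule step) (use a0 b0 c0 p0 qp1 zq1 qpp z q in auto)
  also have "\<dots> = Hf q n z - Hf q (Suc n) z"
    unfolding Hf_def e2 e3 e4 e5 e7 by (simp add: a_def b_def c_def Q_def Z_def)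
  finally show ?thesis .
qed


lemma summable_qsq:
  fixes q C :: real
  assumes "0 < q" "q < 1" "0 < C"
  shows "summable (\<lambda>n. q^(n^2) * C^n)"
proof -
  have "(\<lambda>n. q^n) \<longlonglongrightarrow> 0" by (rule LIMSEQ_realpow_zero) (use assms in auto)
  hence "(\<lambda>n. q^n * C) \<longlonglongrightarrow> 0 * C"
    using tendsto_mult[OF _ tendsto_const[of C]] by blast
  hence "eventually (\<lambda>n. q^n * C < 1/2) sequentially"
    by (intro order_tendstoD) auto
  then obtain N where N: "\<And>n. n \<ge> N \<Longrightarrow> q^n * C < 1/2"
    by (auto simp: eventually_sequentially)
  show ?thesis
  proof (rule summable_comparison_test'[where g="\<lambda>n. (1/2)^n" and N=N])
    show "summable (\<lambda>n. (1/2::real)^n)" by (rule summable_geometric) simp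
  next
    fix n assume "n \<ge> N"
    have eq: "q^(n^2) * C^n = (q^n*C)^n"
      by (simp add: power2_eq_square power_mult power_mult_distrib)
    have "0 \<le> q^n*C" using assms by simp
    hence "(q^n*C)^n \<le> (1/2)^n" using N[OF \<open>n\<ge>N\<close>] by (intro power_mono) auto
    thus "norm (q^(n^2) * C^n) \<le> (1/2)^n" using assms eq by simp
  qed
qed

lemma qpoch_le1:
  assumes "0 < q" "q < 1" "0 \<le> z" "z \<le> 1"
  shows "qpoch z q n \<le> 1"
  unfolding qpoch_def
proof (rule prod_le_1)
  fix i assume "i \<in> {..<n}"
  have "q^i \<le> 1" using assms by (simp add: power_le_one)
  hence "z*q^i \<le> 1" using assms by (meson mult_le_one zero_le_power less_imp_le)
  thus "0 \<le> 1 - z*q^i \<and> 1 - z*q^i \<le> 1" using assms by simp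
qed

definition cst :: "real \<Rightarrow> real \<Rightarrow> real" where
  "cst q x = 1/((1-x)^2*(1-q)^2)"

lemma bound_R:
  fixes q z x :: real
  assumes q: "0 < q" "q < 1" and z: "0 \<le> z" "z \<le> x" "x < 1"
  shows "\<bar>Rf q n z\<bar> \<le> 2/((1-q)*(1-x)^2) * (q^(n^2) * cst q x ^ n)"
proof -
  define N where "N = 1 - 2 * q ^ (2*n+1) * z + q ^ (n+1)"
  define D where "D = (1 - q ^ (2*n+1)) * (1 + q ^ (n+1))"
  define a where "a = qpoch z q (n+1)"
  define b where "b = qpoch q q n"
  define c where "c = qpoch q q (2*n)"
  have p1: "0 \<le> q^(2*n+1)" "0 \<le> q^(n+1)" "q^(n+1) \<le> 1"
    using q power_le_one[of q "n+1"] by auto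
  have "q^(2*n) \<le> 1" using q power_le_one[of q "2*n"] by auto
  hence p1': "q^(2*n+1) \<le> q" using q by (simp add: mult_left_le)
  have z1: "z \<le> 1" using z by simp
  have "q^(2*n+1)*z \<le> 1" using p1 p1' q z1 z by (meson dual_order.trans less_imp_le mult_le_one)
  moreover have "0 \<le> q^(2*n+1)*z" using p1 z by simp
  ultimately have Nb: "\<bar>N\<bar> \<le> 2" unfolding N_def using p1 by (simp add: abs_le_iff)
  have Db: "D \<ge> 1 - q" unfolding D_def
  proof -
    have "1 - q \<le> 1 - q^(2*n+1)" using p1' by simp
    moreover have "1 \<le> 1 + q^(n+1)" using p1 by simp
    moreover have "0 \<le> 1 - q^(2*n+1)" using power_le_one[of q "2*n+1"] q by linarith
    ultimately have "(1 - q) * 1 \<le> (1 - q^(2*n+1)) * (1 + q^(n+1))"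
      by (intro mult_mono) auto
    thus "1 - q \<le> (1 - q^(2*n+1)) * (1 + q^(n+1))" by simp
  qed
  have a0: "a \<ge> (1-x)^(n+1)" unfolding a_def using qpoch_lower[OF q z] .
  have b0: "0 < b" "b \<le> 1" unfolding b_def using qpoch_pos[of q q n] qpoch_le1[of q q n] q by auto
  have c0: "c \<ge> (1-q)^(2*n)" unfolding c_def using qpoch_lower[of q q q "2*n"] q by auto
  have Z: "0 \<le> z^(2*n)" "z^(2*n) \<le> 1" using z by (auto simp: power_le_one)
  have x1: "0 < 1 - x" "0 < 1 - q" using z q by auto
  have Dp: "D > 0" using Db x1 by linarith
  have cp: "c > 0" unfolding c_def using qpoch_pos[of q q "2*n"] q by auto
  have Qp: "q^(n^2) > 0" using q by simp
  have "\<bar>Rf q n z\<bar> = (\<bar>N\<bar> * z^(2*n) * b^4 * q^(n^2)) / (D * a^2 * c)"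
    unfolding Rf_def N_def[symmetric] D_def[symmetric] a_def[symmetric] b_def[symmetric] c_def[symmetric]
    using Dp cp Qp Z b0 by (simp add: abs_mult abs_divide mult_ac)
  also have "\<dots> \<le> (2 * q^(n^2)) / ((1-q) * ((1-x)^(n+1))^2 * (1-q)^(2*n))"
  proof (rule frac_le)
    have b4: "b^4 \<le> 1" "0 \<le> b^4" using b0 by (auto simp: power_le_one)
    have nz: "\<bar>N\<bar> * z^(2*n) \<le> 2 * 1"
      using Nb Z by (intro mult_mono) auto
    have "\<bar>N\<bar> * z^(2*n) * b^4 \<le> 2 * 1 * 1"
      by (rule mult_mono[OF nz b4(1) _ b4(2)]) simp
    thus "\<bar>N\<bar> * z^(2*n) * b^4 * q^(n^2) \<le> 2 * q^(n^2)"
      using q by (intro mult_right_mono) auto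
    show "0 \<le> 2 * q^(n^2)" using q by simp
    show "0 < (1-q) * ((1-x)^(n+1))^2 * (1-q)^(2*n)" using x1 by simp
    have s1: "((1-x)^(n+1))^2 \<le> a^2" using a0 x1 by (intro power_mono) auto
    have s2: "(1-q) * ((1-x)^(n+1))^2 \<le> D * a^2" by (rule mult_mono[OF Db s1]) (use Dp x1 in auto)
    show "(1-q) * ((1-x)^(n+1))^2 * (1-q)^(2*n) \<le> D * a^2 * c"
      by (rule mult_mono[OF s2 c0]) (use Dp x1 in auto)
  qed
  also have "\<dots> = 2/((1-q)*(1-x)^2) * (q^(n^2) * cst q x ^ n)"
  proof -
    define U where "U = ((1-x)^2)^n"
    define V where "V = ((1-q)^2)^n"
    have U0: "U > 0" "V > 0" unfolding U_def V_def using x1 by auto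
    have e1: "((1-x)^(n+1))^2 = (1-x)^2 * U" unfolding U_def
      by (simp only: power_mult[symmetric] power_add[symmetric]) (simp add: mult.commute)
    have e2: "(1-q)^(2*n) = V" unfolding V_def by (simp only: power_mult)
    have e3: "cst q x ^ n = 1/(U*V)" unfolding cst_def U_def V_def
      by (simp add: power_divide power_mult_distrib)
    show ?thesis unfolding e1 e2 e3 using U0 x1 by (simp add: field_simps)
  qed
  finally show ?thesis .
qed


lemma cst_pos: "x < 1 \<Longrightarrow> q < 1 \<Longrightarrow> cst q x > 0"
  unfolding cst_def by simp

lemma bound_H:
  fixes q z x :: real
  assumes q: "0 < q" "q < 1" and z: "0 \<le> z" "z \<le> x" "x < 1"
  shows "0 \<le> Hf q n z" "Hf q n z \<le> 1/(1-x)^2 * (q^(n^2) * cst q x ^ n)"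
proof -
  define a where "a = qpoch z q (n+1)"
  define b where "b = qpoch q q n"
  define c where "c = qpoch q q (2*n)"
  have a0: "a \<ge> (1-x)^(n+1)" unfolding a_def using qpoch_lower[OF q z] .
  have b0: "0 < b" "b \<le> 1" unfolding b_def using qpoch_pos[of q q n] qpoch_le1[of q q n] q by auto
  have c0: "c \<ge> (1-q)^(2*n)" unfolding c_def using qpoch_lower[of q q q "2*n"] q by auto
  have cp: "c > 0" unfolding c_def using qpoch_pos[of q q "2*n"] q by auto
  have Z: "0 \<le> z^(2*n)" "z^(2*n) \<le> 1" using z by (auto simp: power_le_one)
  have x1: "0 < 1 - x" "0 < 1 - q" using z q by auto
  have ap: "a > 0" using a0 x1 by (meson less_le_trans zero_less_power)
  have Qp: "q^(n^2) > 0" using q by simp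
  have eq: "Hf q n z = (z^(2*n) * b^4 * q^(n^2)) / (c * a^2)"
    unfolding Hf_def a_def b_def c_def by (simp add: mult_ac)
  show "0 \<le> Hf q n z" unfolding eq using Z b0 cp ap Qp by simp
  have b4: "b^4 \<le> 1" "0 \<le> b^4" using b0 by (auto simp: power_le_one)
  have "(z^(2*n) * b^4 * q^(n^2)) / (c * a^2) \<le> (1 * q^(n^2)) / ((1-q)^(2*n) * ((1-x)^(n+1))^2)"
  proof (rule frac_le)
    have "z^(2*n) * b^4 \<le> 1 * 1" by (rule mult_mono[OF Z(2) b4(1)]) (use b4 in auto)
    thus "z^(2*n) * b^4 * q^(n^2) \<le> 1 * q^(n^2)" using Qp by (intro mult_right_mono) auto
    show "0 \<le> 1 * q^(n^2)" using Qp by simp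
    show "0 < (1-q)^(2*n) * ((1-x)^(n+1))^2" using x1 by simp
    have s1: "((1-x)^(n+1))^2 \<le> a^2" using a0 x1 by (intro power_mono) auto
    show "(1-q)^(2*n) * ((1-x)^(n+1))^2 \<le> c * a^2"
      by (rule mult_mono[OF c0 s1]) (use cp x1 in auto)
  qed
  also have "\<dots> = 1/(1-x)^2 * (q^(n^2) * cst q x ^ n)"
  proof -
    define U where "U = ((1-x)^2)^n"
    define V where "V = ((1-q)^2)^n"
    have U0: "U > 0" "V > 0" unfolding U_def V_def using x1 by auto
    have e1: "((1-x)^(n+1))^2 = (1-x)^2 * U" unfolding U_def
      by (simp only: power_mult[symmetric] power_add[symmetric]) (simp add: mult.commute)
    have e2: "(1-q)^(2*n) = V" unfolding V_def by (simp only: power_mult)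
    have e3: "cst q x ^ n = 1/(U*V)" unfolding cst_def U_def V_def
      by (simp add: power_divide power_mult_distrib)
    show ?thesis unfolding e1 e2 e3 using U0 x1 by (simp add: field_simps)
  qed
  finally show "Hf q n z \<le> 1/(1-x)^2 * (q^(n^2) * cst q x ^ n)" unfolding eq .
qed

lemma H_lim:
  fixes q z x :: real
  assumes q: "0 < q" "q < 1" and z: "0 \<le> z" "z \<le> x" "x < 1"
  shows "(\<lambda>n. Hf q n z) \<longlonglongrightarrow> 0"
proof -
  have "summable (\<lambda>n. 1/(1-x)^2 * (q^(n^2) * cst q x ^ n))"
    using summable_qsq[OF q cst_pos[of x q]] z q by (intro summable_mult) auto
  hence "summable (\<lambda>n. Hf q n z)"
    by (rule summable_comparison_test'[where N=0]) (use bound_H[OF q z] in auto)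
  thus ?thesis by (rule summable_LIMSEQ_zero)
qed

definition Sf :: "real \<Rightarrow> real \<Rightarrow> real" where
  "Sf q z = (\<Sum>n. Rf q n z)"

definition SB :: "real \<Rightarrow> real \<Rightarrow> real" where
  "SB q x = (\<Sum>n. 2/((1-q)*(1-x)^2) * (q^(n^2) * cst q x ^ n))"

lemma R_summable:
  fixes q z x :: real
  assumes q: "0 < q" "q < 1" and z: "0 \<le> z" "z \<le> x" "x < 1"
  shows "summable (\<lambda>n. Rf q n z)" "\<bar>Sf q z\<bar> \<le> SB q x"
proof -
  have sm: "summable (\<lambda>n. 2/((1-q)*(1-x)^2) * (q^(n^2) * cst q x ^ n))"
    using summable_qsq[OF q cst_pos[of x q]] z q by (intro summable_mult) auto
  show "summable (\<lambda>n. Rf q n z)"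
    by (rule summable_comparison_test'[OF sm, where N=0]) (use bound_R[OF q z] in auto)
  show "\<bar>Sf q z\<bar> \<le> SB q x"
    unfolding Sf_def SB_def using norm_suminf_le[OF _ sm, of "\<lambda>n. Rf q n z"] bound_R[OF q z] by auto
qed

lemma S_rec:
  fixes q z x :: real
  assumes q: "0 < q" "q < 1" and z: "0 \<le> z" "z \<le> x" "x < 1"
  shows "Sf q z = 1/(1-z)^2 + q * Sf q (q*z)"
proof -
  have "q*z \<le> 1*z" by (rule mult_right_mono) (use q z in auto)
  hence qz: "0 \<le> q*z" "q*z \<le> x" using q z by auto
  have s1: "(\<lambda>n. q * Rf q n (q*z)) sums (q * Sf q (q*z))"
    unfolding Sf_def by (intro sums_mult summable_sums R_summable[OF q qz z(3)])
  have s2: "(\<lambda>n. Hf q n z - Hf q (Suc n) z) sums (Hf q 0 z - 0)"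
    by (rule telescope_sums'[OF H_lim[OF q z]])
  have "(\<lambda>n. q * Rf q n (q*z) + (Hf q n z - Hf q (Suc n) z)) sums (q * Sf q (q*z) + (Hf q 0 z - 0))"
    by (rule sums_add[OF s1 s2])
  moreover have "(\<lambda>n. q * Rf q n (q*z) + (Hf q n z - Hf q (Suc n) z)) = (\<lambda>n. Rf q n z)"
  proof
    fix n
    have "z < 1" using z by simp
    from key_identity[OF q z(1) this, of n] show "q * Rf q n (q*z) + (Hf q n z - Hf q (Suc n) z) = Rf q n z"
      by simp
  qed
  moreover have "Hf q 0 z = 1/(1-z)^2" unfolding Hf_def by (simp add: qpoch_def)
  ultimately have "(\<lambda>n. Rf q n z) sums (q * Sf q (q*z) + 1/(1-z)^2)" by simp
  hence "Sf q z = q * Sf q (q*z) + 1/(1-z)^2" unfolding Sf_def by (rule sums_unique[symmetric])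
  thus ?thesis by simp
qed

definition Lf :: "real \<Rightarrow> real \<Rightarrow> real" where
  "Lf q z = (\<Sum>k. q ^ k / (1 - q ^ k * z)\<^sup>2)"

lemma L_term_bound:
  fixes q z x :: real
  assumes q: "0 < q" "q < 1" and z: "0 \<le> z" "z \<le> x" "x < 1"
  shows "0 \<le> q ^ k / (1 - q ^ k * z)\<^sup>2" "q ^ k / (1 - q ^ k * z)\<^sup>2 \<le> q^k / (1-x)^2"
proof -
  have "q^k \<le> 1" using q by (simp add: power_le_one)
  hence "q^k * z \<le> x" using z q by (meson dual_order.trans mult_left_le_one_le zero_le_power less_imp_le)
  hence h: "1 - x \<le> 1 - q^k*z" by simp
  have x1: "0 < 1 - x" using z by simp
  show "0 \<le> q ^ k / (1 - q ^ k * z)\<^sup>2" using q by simp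
  have "(1-x)^2 \<le> (1 - q^k*z)^2" using h x1 by (intro power_mono) auto
  moreover have "0 < (1-x)^2" using x1 by simp
  ultimately have "0 < (1 - q^k*z)^2 * (1-x)^2" by (meson less_le_trans mult_pos_pos)
  thus "q ^ k / (1 - q ^ k * z)\<^sup>2 \<le> q^k / (1-x)^2"
    using x1 q \<open>(1-x)^2 \<le> (1 - q^k*z)^2\<close> by (intro divide_left_mono) auto
qed

lemma L_summable:
  fixes q z x :: real
  assumes q: "0 < q" "q < 1" and z: "0 \<le> z" "z \<le> x" "x < 1"
  shows "summable (\<lambda>k. q ^ k / (1 - q ^ k * z)\<^sup>2)" "\<bar>Lf q z\<bar> \<le> 1/((1-x)^2*(1-q))"
proof -
  have sm: "summable (\<lambda>k. q^k / (1-x)^2)"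
    using q by (intro summable_divide summable_geometric) auto
  show "summable (\<lambda>k. q ^ k / (1 - q ^ k * z)\<^sup>2)"
    by (rule summable_comparison_test'[OF sm, where N=0]) (use L_term_bound[OF q z] q in auto)
  have "\<bar>Lf q z\<bar> \<le> (\<Sum>k. q^k / (1-x)^2)"
    unfolding Lf_def using norm_suminf_le[OF _ sm, of "\<lambda>k. q ^ k / (1 - q ^ k * z)\<^sup>2"] L_term_bound[OF q z] q by auto
  also have "(\<Sum>k. q^k / (1-x)^2) = 1/((1-x)^2*(1-q))"
    using suminf_divide[OF summable_geometric[of q], of "(1-x)^2"] suminf_geometric[of q] q by simp
  finally show "\<bar>Lf q z\<bar> \<le> 1/((1-x)^2*(1-q))" .
qed

lemma L_rec:
  fixes q z x :: real
  assumes q: "0 < q" "q < 1" and z: "0 \<le> z" "z \<le> x" "x < 1"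
  shows "Lf q z = 1/(1-z)^2 + q * Lf q (q*z)"
proof -
  have "q*z \<le> 1*z" by (rule mult_right_mono) (use q z in auto)
  hence qz: "0 \<le> q*z" "q*z \<le> x" using q z by auto
  have sm: "summable (\<lambda>k. q ^ k / (1 - q ^ k * z)\<^sup>2)" by (rule L_summable[OF q z])
  have "(\<Sum>k. q ^ Suc k / (1 - q ^ Suc k * z)\<^sup>2) = Lf q z - 1/(1-z)^2"
    unfolding Lf_def using suminf_split_head[OF sm] by simp
  moreover have "(\<lambda>k. q ^ Suc k / (1 - q ^ Suc k * z)\<^sup>2) = (\<lambda>k. q * (q ^ k / (1 - q ^ k * (q*z))\<^sup>2))"
    by (simp add: mult_ac)
  moreover have "(\<Sum>k. q * (q ^ k / (1 - q ^ k * (q*z))\<^sup>2)) = q * Lf q (q*z)"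
    unfolding Lf_def by (rule suminf_mult[OF L_summable(1)[OF q qz z(3)]])
  ultimately show ?thesis by simp
qed


lemma L_eq_S:
  fixes q x :: real
  assumes q: "0 < q" "q < 1" and x: "0 \<le> x" "x < 1"
  shows "Lf q x = Sf q x"
proof -
  define E where "E k = Lf q (x*q^k) - Sf q (x*q^k)" for k
  define B where "B = 1/((1-x)^2*(1-q)) + SB q x"
  have zk: "0 \<le> x*q^k" "x*q^k \<le> x" for k
  proof -
    show "0 \<le> x*q^k" using x q by simp
    have "q^k \<le> 1" using q by (simp add: power_le_one)
    thus "x*q^k \<le> x" using x by (simp add: mult_left_le)
  qed
  have rec: "E k = q * E (Suc k)" for k
  proof -
    have e: "q*(x*q^k) = x*q^Suc k" by simp
    show ?thesis unfolding E_def
      using L_rec[OF q zk(1)[of k] zk(2)[of k] x(2)] S_rec[OF q zk(1)[of k] zk(2)[of k] x(2)]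
      unfolding e by (simp add: algebra_simps)
  qed
  have E0: "E 0 = q^k * E k" for k
  proof (induction k)
    case 0 then show ?case by simp
  next
    case (Suc k) then show ?case using rec[of k] by simp
  qed
  have Eb: "\<bar>E k\<bar> \<le> B" for k
  proof -
    have "\<bar>E k\<bar> \<le> \<bar>Lf q (x*q^k)\<bar> + \<bar>Sf q (x*q^k)\<bar>" unfolding E_def by linarith
    also have "\<dots> \<le> B" unfolding B_def
      using L_summable(2)[OF q zk(1)[of k] zk(2)[of k] x(2)] R_summable(2)[OF q zk(1)[of k] zk(2)[of k] x(2)]
      by linarith
    finally show ?thesis .
  qed
  have le: "\<bar>E 0\<bar> \<le> q^k * B" for k
  proof -
    have "\<bar>E 0\<bar> = q^k * \<bar>E k\<bar>" using E0[of k] q by (simp add: abs_mult)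
    also have "\<dots> \<le> q^k * B" using Eb[of k] q by (intro mult_left_mono) auto
    finally show ?thesis .
  qed
  have lim: "(\<lambda>k. q^k * B) \<longlonglongrightarrow> 0 * B"
    by (intro tendsto_mult LIMSEQ_realpow_zero tendsto_const) (use q in auto)
  have "\<bar>E 0\<bar> \<le> 0 * B"
    by (rule LIMSEQ_le[OF tendsto_const lim]) (use le in auto)
  hence "E 0 = 0" by simp
  thus ?thesis unfolding E_def by simp
qed

theorem mainTheorem20:
  fixes q :: real
  assumes "0 < q" and "q < 1"
  shows "summable (\<lambda>k. q ^ k / (1 - q ^ k * sqrt q)\<^sup>2) \<and>
    (\<lambda>n. (1 - 2 * q ^ (2*n+1) * sqrt q + q ^ (n+1)) * q ^ (n^2+n)
          / ((1 - q ^ (2*n+1)) * (1 + q ^ (n+1)))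
          * (qpoch q q n ^ 4 / ((qpoch (sqrt q) q (n+1))\<^sup>2 * qpoch q q (2*n))))
      sums (\<Sum>k. q ^ k / (1 - q ^ k * sqrt q)\<^sup>2)"
proof -
  have q: "0 < q" "q < 1" using assms by auto
  have x: "0 \<le> sqrt q" "sqrt q \<le> sqrt q" "sqrt q < 1" using q by auto
  have sm: "summable (\<lambda>k. q ^ k / (1 - q ^ k * sqrt q)\<^sup>2)" by (rule L_summable(1)[OF q x])
  have R: "(\<lambda>n. Rf q n (sqrt q)) sums Sf q (sqrt q)"
    unfolding Sf_def by (intro summable_sums R_summable(1)[OF q x])
  have eqR: "Rf q n (sqrt q) = (1 - 2 * q ^ (2*n+1) * sqrt q + q ^ (n+1)) * q ^ (n^2+n)
          / ((1 - q ^ (2*n+1)) * (1 + q ^ (n+1)))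
          * (qpoch q q n ^ 4 / ((qpoch (sqrt q) q (n+1))\<^sup>2 * qpoch q q (2*n)))" for n
  proof -
    have "sqrt q ^ (2*n) = q^n" using q by (simp add: power_mult)
    hence "q ^ (n^2) * sqrt q ^ (2*n) = q^(n^2+n)" by (simp add: power_add)
    thus ?thesis unfolding Rf_def by (simp add: mult.assoc)
  qed
  have "Sf q (sqrt q) = (\<Sum>k. q ^ k / (1 - q ^ k * sqrt q)\<^sup>2)"
    using L_eq_S[OF q x(1) x(3)] unfolding Lf_def by simp
  with R eqR sm show ?thesis by simp
qed

end
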